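(* For all positive integers $n$ and $k$ with $n\ge k$, $\log\log(d_n+1) \le n+\log\log(d_k+1)-k$.
   Context: All logarithms $\log$ are to base $2$. A delta-matroid $(E,\mathcal F)$ consists of a finite ground set $E$ and a non-empty collection $\mathcal F$ of subsets of $E$ (the feasible sets) satisfying the symmetric exchange axiom: for all $X,Y\in\mathcal F$ and every $e\in X\triangle Y$ there exists $f\in X\triangle Y$ (possibly $f=e$) with $X\triangle\{e,f\}\in\mathcal F$. Let $d_n$ denote the number of labelled delta-matroids with ground set $[n]=\{1,\dots,n\}$, i.e. the number of collections $\mathcal F$ of subsets of $[n]$ such that $([n],\mathcal F)$ is a delta-matroid. *)

theory Defs
  imports Complex_Main
begin

definition symdiff :: "'a set \<Rightarrow> 'a set \<Rightarrow> 'a set" where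
  "symdiff X Y = (X - Y) \<union> (Y - X)"

definition delta_matroid :: "'a set \<Rightarrow> 'a set set \<Rightarrow> bool" where
  "delta_matroid E F \<longleftrightarrow> finite E \<and> F \<noteq> {} \<and> (\<forall>X\<in>F. X \<subseteq> E) \<and>
     (\<forall>X\<in>F. \<forall>Y\<in>F. \<forall>e\<in>symdiff X Y. \<exists>f\<in>symdiff X Y. symdiff X {e, f} \<in> F)"

definition num_delta_matroids :: "nat \<Rightarrow> nat" where
  "num_delta_matroids n = card {F. F \<subseteq> Pow {1..n} \<and> delta_matroid {1..n} F}"

end

theory Submission
  imports Defs
begin

definition DM :: "nat \<Rightarrow> nat set set set" where
  "DM n = {F. F \<subseteq> Pow {1..n} \<and> delta_matroid {1..n} F}"

lemma DM_finite: "finite (DM n)"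
proof -
  have "DM n \<subseteq> Pow (Pow {1..n})" unfolding DM_def by auto
  thus ?thesis by (rule finite_subset) auto
qed

lemma empty_notin_DM: "{} \<notin> DM n"
  unfolding DM_def delta_matroid_def by auto

lemma DM_nonempty: "{{}} \<in> DM n"
  unfolding DM_def delta_matroid_def symdiff_def by auto

lemma num_DM: "num_delta_matroids n = card (DM n)"
  unfolding num_delta_matroids_def DM_def by simp

lemma sub_aux: "X \<subseteq> {1..Suc n} \<Longrightarrow> X - {Suc n} \<subseteq> {1..n}"
proof
  fix x assume "X \<subseteq> {1..Suc n}" "x \<in> X - {Suc n}"
  thus "x \<in> {1..n}" by (auto simp: subset_iff le_Suc_eq)
qed

lemma sub_aux2: "X \<in> F \<Longrightarrow> F \<subseteq> Pow {1..Suc n} \<Longrightarrow> X - {Suc n} \<subseteq> {1..n}"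
  using sub_aux by blast

lemma part0:
  assumes "F \<in> DM (Suc n)"
  shows "{X\<in>F. Suc n \<notin> X} \<in> insert {} (DM n)"
proof (cases "{X\<in>F. Suc n \<notin> X} = {}")
  case False
  have sub: "F \<subseteq> Pow {1..Suc n}" and dm: "delta_matroid {1..Suc n} F"
    using assms unfolding DM_def by auto
  have "{X\<in>F. Suc n \<notin> X} \<subseteq> Pow {1..n}"
  proof
    fix X assume "X \<in> {X\<in>F. Suc n \<notin> X}"
    hence "X \<in> F" "Suc n \<notin> X" by auto
    thus "X \<in> Pow {1..n}" using sub_aux2[OF _ sub, of X] by simp
  qed
  moreover have "delta_matroid {1..n} {X\<in>F. Suc n \<notin> X}"
    unfolding delta_matroid_def
  proof (intro conjI ballI)
    show "{X\<in>F. Suc n \<notin> X} \<noteq> {}" by fact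
  next
    fix X assume "X \<in> {X\<in>F. Suc n \<notin> X}"
    thus "X \<subseteq> {1..n}" using sub_aux2[OF _ sub, of X] by simp
  next
    fix X Y e assume X: "X \<in> {X\<in>F. Suc n \<notin> X}" and Y: "Y \<in> {X\<in>F. Suc n \<notin> X}"
      and e: "e \<in> symdiff X Y"
    from dm X Y e obtain f where f: "f \<in> symdiff X Y" "symdiff X {e, f} \<in> F"
      unfolding delta_matroid_def by blast
    have "Suc n \<notin> symdiff X Y" using X Y unfolding symdiff_def by auto
    hence "Suc n \<notin> symdiff X {e,f}" using e f X unfolding symdiff_def by auto
    thus "\<exists>f\<in>symdiff X Y. symdiff X {e, f} \<in> {X\<in>F. Suc n \<notin> X}" using f by blast
  qed simp
  ultimately show ?thesis unfolding DM_def by auto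
qed simp

lemma part1:
  assumes "F \<in> DM (Suc n)"
  shows "(\<lambda>X. X - {Suc n}) ` {X\<in>F. Suc n \<in> X} \<in> insert {} (DM n)"
proof (cases "{X\<in>F. Suc n \<in> X} = {}")
  case False
  have sub: "F \<subseteq> Pow {1..Suc n}" and dm: "delta_matroid {1..Suc n} F"
    using assms unfolding DM_def by auto
  have "(\<lambda>X. X - {Suc n}) ` {X\<in>F. Suc n \<in> X} \<subseteq> Pow {1..n}"
    using sub_aux2[OF _ sub] by auto
  moreover have "delta_matroid {1..n} ((\<lambda>X. X - {Suc n}) ` {X\<in>F. Suc n \<in> X})"
    unfolding delta_matroid_def
  proof (intro conjI ballI)
    show "(\<lambda>X. X - {Suc n}) ` {X\<in>F. Suc n \<in> X} \<noteq> {}" using False by simp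
  next
    fix X assume "X \<in> (\<lambda>X. X - {Suc n}) ` {X\<in>F. Suc n \<in> X}"
    thus "X \<subseteq> {1..n}" using sub_aux2[OF _ sub] by auto
  next
    fix X' Y' e assume X': "X' \<in> (\<lambda>X. X - {Suc n}) ` {X\<in>F. Suc n \<in> X}"
      and Y': "Y' \<in> (\<lambda>X. X - {Suc n}) ` {X\<in>F. Suc n \<in> X}"
      and e: "e \<in> symdiff X' Y'"
    from X' obtain X where X: "X \<in> F" "Suc n \<in> X" "X' = X - {Suc n}" by auto
    from Y' obtain Y where Y: "Y \<in> F" "Suc n \<in> Y" "Y' = Y - {Suc n}" by auto
    have sd: "symdiff X' Y' = symdiff X Y" using X Y unfolding symdiff_def by auto
    from dm X Y e sd obtain f where f: "f \<in> symdiff X Y" "symdiff X {e, f} \<in> F"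
      unfolding delta_matroid_def by metis
    have ns: "Suc n \<notin> symdiff X Y" using X Y unfolding symdiff_def by auto
    hence "Suc n \<in> symdiff X {e,f}" using e f X sd unfolding symdiff_def by auto
    moreover have "symdiff X' {e,f} = symdiff X {e,f} - {Suc n}"
      using X ns e f sd unfolding symdiff_def by auto
    ultimately have "symdiff X' {e,f} \<in> (\<lambda>X. X - {Suc n}) ` {X\<in>F. Suc n \<in> X}"
      using f by blast
    thus "\<exists>f\<in>symdiff X' Y'. symdiff X' {e, f} \<in> (\<lambda>X. X - {Suc n}) ` {X\<in>F. Suc n \<in> X}"
      using f sd by metis
  qed simp
  ultimately show ?thesis unfolding DM_def by auto
qed simp

lemma recon:
  assumes "F \<subseteq> Pow {1..Suc n}"
  shows "F = {X\<in>F. Suc n \<notin> X} \<union> insert (Suc n) ` ((\<lambda>X. X - {Suc n}) ` {X\<in>F. Suc n \<in> X})"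
proof -
  have "\<And>X. X \<in> F \<Longrightarrow> Suc n \<in> X \<Longrightarrow> insert (Suc n) (X - {Suc n}) = X" by auto
  thus ?thesis by (auto simp: image_image)
qed

lemma step: "card (DM (Suc n)) + 1 \<le> (card (DM n) + 1)^2"
proof -
  define g where "g F = ({X\<in>F. Suc n \<notin> X}, (\<lambda>X. X - {Suc n}) ` {X\<in>F. Suc n \<in> X})" for F :: "nat set set"
  define S where "S = insert {} (DM n)"
  have inj: "inj_on g (DM (Suc n))"
  proof (rule inj_onI)
    fix F G assume F: "F \<in> DM (Suc n)" and G: "G \<in> DM (Suc n)" and eq: "g F = g G"
    have "F \<subseteq> Pow {1..Suc n}" "G \<subseteq> Pow {1..Suc n}" using F G unfolding DM_def by auto
    from recon[OF this(1)] recon[OF this(2)] eq show "F = G" unfolding g_def by simp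
  qed
  have im: "g ` DM (Suc n) \<subseteq> S \<times> S - {({},{})}"
  proof
    fix p assume "p \<in> g ` DM (Suc n)"
    then obtain F where F: "F \<in> DM (Suc n)" "p = g F" by auto
    have "F \<noteq> {}" using F(1) empty_notin_DM by metis
    hence "p \<noteq> ({},{})" using F(2) unfolding g_def by auto
    thus "p \<in> S \<times> S - {({},{})}" using part0[OF F(1)] part1[OF F(1)] F(2)
      unfolding g_def S_def by auto
  qed
  have fS: "finite S" unfolding S_def using DM_finite by simp
  have cS: "card S = card (DM n) + 1" unfolding S_def using DM_finite empty_notin_DM by simp
  have "card (DM (Suc n)) = card (g ` DM (Suc n))" using card_image[OF inj] by simp
  also have "\<dots> \<le> card (S \<times> S - {({},{})})"
    by (rule card_mono) (use fS im in auto)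
  also have "\<dots> = card S * card S - 1"
  proof -
    have "({},{}) \<in> S \<times> S" unfolding S_def by simp
    hence "card (S \<times> S - {({},{})}) = card (S \<times> S) - 1"
      using fS by (simp add: card_Diff_singleton)
    thus ?thesis by (simp add: card_cartesian_product)
  qed
  finally show ?thesis using cS by (simp add: power2_eq_square)
qed

lemma card_pos: "card (DM n) \<ge> 1"
  using DM_finite DM_nonempty by (metis One_nat_def Suc_leI card_gt_0_iff empty_iff)

lemma logstep: "log 2 (real (card (DM (Suc n))) + 1) \<le> 2 * log 2 (real (card (DM n)) + 1)"
proof -
  have "real (card (DM (Suc n))) + 1 \<le> (real (card (DM n)) + 1)^2"
  proof -
    have "real (card (DM (Suc n)) + 1) \<le> real ((card (DM n) + 1)^2)"
      using step[of n] by (simp only: of_nat_le_iff)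
    thus ?thesis by (simp add: add.commute)
  qed
  hence "log 2 (real (card (DM (Suc n))) + 1) \<le> log 2 ((real (card (DM n)) + 1)^2)"
    by (intro log_le_cancel_iff[THEN iffD2]) auto
  also have "\<dots> = 2 * log 2 (real (card (DM n)) + 1)"
    by (subst log_nat_power) auto
  finally show ?thesis .
qed

lemma logiter: "log 2 (real (card (DM (k + j))) + 1) \<le> 2 ^ j * log 2 (real (card (DM k)) + 1)"
proof (induction j)
  case (Suc j)
  have "log 2 (real (card (DM (k + Suc j))) + 1) \<le> 2 * log 2 (real (card (DM (k + j))) + 1)"
    using logstep[of "k+j"] by simp
  also have "\<dots> \<le> 2 * (2 ^ j * log 2 (real (card (DM k)) + 1))" using Suc by simp
  finally show ?case by simp
qed simp

lemma logpos: "log 2 (real (card (DM n)) + 1) \<ge> 1"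
  using card_pos[of n] by simp

theorem corollary3p6:
  fixes n k :: nat
  assumes "1 \<le> k" and "k \<le> n"
  shows "log 2 (log 2 (real (num_delta_matroids n) + 1))
           \<le> real n + log 2 (log 2 (real (num_delta_matroids k) + 1)) - real k"
proof -
  obtain j where n: "n = k + j" using assms(2) le_Suc_ex by blast
  let ?a = "log 2 (real (card (DM n)) + 1)" and ?b = "log 2 (real (card (DM k)) + 1)"
  have "?a \<le> 2 ^ j * ?b" using logiter[of k j] n by simp
  hence "log 2 ?a \<le> log 2 (2 ^ j * ?b)"
    using logpos[of n] logpos[of k] by (intro log_le_cancel_iff[THEN iffD2]) auto
  also have "\<dots> = real j + log 2 ?b"
  proof -
    have "?b > 0" using logpos[of k] by linarith
    hence "log 2 (2 ^ j * ?b) = log 2 (2 ^ j) + log 2 ?b"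
      by (intro log_mult_pos) auto
    moreover have "log 2 ((2::real) ^ j) = real j" by simp
    ultimately show ?thesis by linarith
  qed
  finally show ?thesis unfolding num_DM using n by simp
qed

end
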